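(* Let $p\le q$ be positive integers. The complete bipartite graph $K_{p,q}$ is a TRVG with respect to the torus if and only if $p\le 2$ or $(p,q)\in\{(3,3),(3,4),(3,5),(3,6),(4,4)\}$.
   Context: View the torus as an axis-parallel rectangle $[0,W]\times[0,H]$ with opposite sides identified. Horizontal lines $y=c$ and vertical lines $x=c$ are then closed curves on the torus. A graph $G$ is a TRVG with respect to the torus if its vertices can be represented by a collection of pairwise non-overlapping axis-parallel rectangles on this torus (a rectangle may wrap across the identified sides), one per vertex, such that two distinct vertices are adjacent if and only if some horizontal or vertical line of the torus intersects the interiors of both of their rectangles (other rectangles do not block visibility). *)

theory Defs
  imports Complex_Main
begin

definition in_open_arc :: "real \<Rightarrow> real \<Rightarrow> real \<Rightarrow> real \<Rightarrow> bool" where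
  "in_open_arc L a w t \<longleftrightarrow> (\<exists>k::int. a < t + of_int k * L \<and> t + of_int k * L < a + w)"

text \<open>A rectangle on the torus [0,W] x [0,H] is (x0, w, y0, h): it is the product of the
  arc of R/WZ starting at x0 of length w and the arc of R/HZ starting at y0 of length h
  (it may wrap across the identified sides).\<close>
type_synonym trect = "real \<times> real \<times> real \<times> real"

definition valid_trect :: "real \<Rightarrow> real \<Rightarrow> trect \<Rightarrow> bool" where
  "valid_trect W H r = (case r of (x0, w, y0, h) \<Rightarrow> 0 < w \<and> w < W \<and> 0 < h \<and> h < H)"

definition xint :: "real \<Rightarrow> trect \<Rightarrow> real \<Rightarrow> bool" where
  "xint W r t = (case r of (x0, w, y0, h) \<Rightarrow> in_open_arc W x0 w t)"

definition yint :: "real \<Rightarrow> trect \<Rightarrow> real \<Rightarrow> bool" where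
  "yint H r t = (case r of (x0, w, y0, h) \<Rightarrow> in_open_arc H y0 h t)"

definition in_interior :: "real \<Rightarrow> real \<Rightarrow> trect \<Rightarrow> real \<Rightarrow> real \<Rightarrow> bool" where
  "in_interior W H r x y \<longleftrightarrow> xint W r x \<and> yint H r y"

definition non_overlapping :: "real \<Rightarrow> real \<Rightarrow> trect \<Rightarrow> trect \<Rightarrow> bool" where
  "non_overlapping W H r s \<longleftrightarrow> \<not> (\<exists>x y. in_interior W H r x y \<and> in_interior W H s x y)"

definition sees :: "real \<Rightarrow> real \<Rightarrow> trect \<Rightarrow> trect \<Rightarrow> bool" where
  "sees W H r s \<longleftrightarrow> (\<exists>c. yint H r c \<and> yint H s c) \<or> (\<exists>c. xint W r c \<and> xint W s c)"

definition TRVG :: "'a set \<Rightarrow> ('a \<Rightarrow> 'a \<Rightarrow> bool) \<Rightarrow> bool" where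
  "TRVG V E \<longleftrightarrow> (\<exists>W H (R :: 'a \<Rightarrow> trect). 0 < W \<and> 0 < H \<and>
      (\<forall>v\<in>V. valid_trect W H (R v)) \<and>
      (\<forall>u\<in>V. \<forall>v\<in>V. u \<noteq> v \<longrightarrow> non_overlapping W H (R u) (R v)) \<and>
      (\<forall>u\<in>V. \<forall>v\<in>V. u \<noteq> v \<longrightarrow> (E u v \<longleftrightarrow> sees W H (R u) (R v))))"

definition Kpq_V :: "nat \<Rightarrow> nat \<Rightarrow> (nat + nat) set" where
  "Kpq_V p q = Inl ` {..<p} \<union> Inr ` {..<q}"

definition Kpq_E :: "nat + nat \<Rightarrow> nat + nat \<Rightarrow> bool" where
  "Kpq_E u v \<longleftrightarrow> (isl u \<noteq> isl v)"

end

theory Submission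
  imports Defs
begin

definition meet :: "real \<Rightarrow> real \<Rightarrow> real \<Rightarrow> real \<Rightarrow> real \<Rightarrow> bool" where
  "meet L a w b v \<longleftrightarrow> (\<exists>c. in_open_arc L a w c \<and> in_open_arc L b v c)"

lemma meet_k: assumes "0 < w" "0 < v" shows "meet L a w b v \<longleftrightarrow> (\<exists>k::int. a < b + of_int k * L + v \<and> b + of_int k * L < a + w)"
proof
  assume "meet L a w b v"
  then obtain c k1 k2 where h: "a < c + of_int k1 * L" "c + of_int k1 * L < a + w"
    "b < c + of_int (k2::int) * L" "c + of_int k2 * L < b + v"
    unfolding meet_def in_open_arc_def by blast
  have e: "of_int (k1 - k2) * L = of_int k1 * L - of_int k2 * L" by (simp add: algebra_simps)
  show "\<exists>k::int. a < b + of_int k * L + v \<and> b + of_int k * L < a + w"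
    by (rule exI[of _ "k1 - k2"]) (use h e in linarith)
next
  assume "\<exists>k::int. a < b + of_int k * L + v \<and> b + of_int k * L < a + w"
  then obtain k :: int where h: "a < b + of_int k * L + v" "b + of_int k * L < a + w" by blast
  define B where "B = b + of_int k * L"
  have h': "a < B + v" "B < a + w" using h B_def by auto
  define c where "c = (max a B + min (a + w) (B + v)) / 2"
  have c1: "a < c" "c < a + w" "B < c" "c < B + v" using h' assms by (auto simp: c_def max_def min_def)
  have 1: "in_open_arc L a w c" unfolding in_open_arc_def
    by (rule exI[of _ 0]) (use c1 in auto)
  have e: "c + of_int (-k) * L = c - B + b" by (simp add: B_def)
  have 2: "in_open_arc L b v c" unfolding in_open_arc_def
    by (rule exI[of _ "-k"]) (use c1 e in auto)
  show "meet L a w b v" unfolding meet_def using 1 2 by blast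
qed

lemma meet_int:
  fixes L a w b v :: int
  assumes "0 < L" "w < L" "v < L" "0 \<le> a" "a < L" "0 \<le> b" "b < L" and wp: "0 < w" and vp: "0 < v"
  shows "meet (of_int L) (of_int a) (of_int w) (of_int b) (of_int v) \<longleftrightarrow>
    ((a < b+v \<and> b < a+w) \<or> (a < b-L+v \<and> b-L < a+w) \<or> (a < b+L+v \<and> b+L < a+w))"
proof -
  have wpos: "0 < real_of_int w" and vpos: "0 < real_of_int v" using wp vp by auto
  have "meet (of_int L) (of_int a) (of_int w) (of_int b) (of_int v) \<longleftrightarrow>
     (\<exists>k::int. a < b + k * L + v \<and> b + k * L < a + w)"
    unfolding meet_k[OF wpos vpos]
    by (simp only: of_int_add[symmetric] of_int_mult[symmetric] of_int_less_iff)
  also have "\<dots> \<longleftrightarrow> ((a < b+v \<and> b < a+w) \<or> (a < b-L+v \<and> b-L < a+w) \<or> (a < b+L+v \<and> b+L < a+w))"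
  proof
    assume "\<exists>k::int. a < b + k * L + v \<and> b + k * L < a + w"
    then obtain k where k: "a < b + k * L + v" "b + k * L < a + w" by blast
    have "k \<le> 1"
    proof (rule ccontr)
      assume "\<not> k \<le> 1" hence "2 * L \<le> k * L" using assms by (intro mult_right_mono) auto
      thus False using k assms by linarith
    qed
    moreover have "k \<ge> -1"
    proof (rule ccontr)
      assume "\<not> k \<ge> -1" hence "k * L \<le> -2 * L" using assms by (intro mult_right_mono) auto
      thus False using k assms by linarith
    qed
    ultimately have "k = -1 \<or> k = 0 \<or> k = 1" by linarith
    thus "(a < b+v \<and> b < a+w) \<or> (a < b-L+v \<and> b-L < a+w) \<or> (a < b+L+v \<and> b+L < a+w)"
      using k by auto
  next
    assume "(a < b+v \<and> b < a+w) \<or> (a < b-L+v \<and> b-L < a+w) \<or> (a < b+L+v \<and> b+L < a+w)"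
    thus "\<exists>k::int. a < b + k * L + v \<and> b + k * L < a + w"
    proof (elim disjE)
      assume "a < b+v \<and> b < a+w" thus ?thesis by (intro exI[of _ 0]) auto
    next
      assume "a < b-L+v \<and> b-L < a+w" thus ?thesis by (intro exI[of _ "-1"]) auto
    next
      assume "a < b+L+v \<and> b+L < a+w" thus ?thesis by (intro exI[of _ 1]) auto
    qed
  qed
  finally show ?thesis .
qed

lemma sees_meet: "sees W H (x0,w,y0,h) (x1,w1,y1,h1) \<longleftrightarrow> meet W x0 w x1 w1 \<or> meet H y0 h y1 h1"
  unfolding sees_def meet_def xint_def yint_def by auto

lemma nonov_meet: "non_overlapping W H (x0,w,y0,h) (x1,w1,y1,h1) \<longleftrightarrow> \<not> (meet W x0 w x1 w1 \<and> meet H y0 h y1 h1)"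
  unfolding non_overlapping_def meet_def in_interior_def xint_def yint_def by auto

lemma start_lemma:
  assumes "meet L a w b v" "0 < w" "0 < v"
  shows "(\<exists>e>0. \<forall>t. a < t \<and> t < a + e \<longrightarrow> in_open_arc L b v t) \<or>
         (\<exists>e>0. \<forall>t. b < t \<and> t < b + e \<longrightarrow> in_open_arc L a w t)"
proof -
  obtain k :: int where h: "a < b + of_int k * L + v" "b + of_int k * L < a + w"
    using assms meet_k by blast
  show ?thesis
  proof (cases "a \<ge> b + of_int k * L")
    case True
    have "\<forall>t. a < t \<and> t < a + min w (b + of_int k * L + v - a) \<longrightarrow> in_open_arc L b v t"
      unfolding in_open_arc_def
    proof (intro allI impI)
      fix t assume "a < t \<and> t < a + min w (b + of_int k * L + v - a)"
      thus "\<exists>k'::int. b < t + of_int k' * L \<and> t + of_int k' * L < b + v"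
        using True by (intro exI[of _ "-k"]) auto
    qed
    moreover have "min w (b + of_int k * L + v - a) > 0" using h assms by auto
    ultimately show ?thesis by blast
  next
    case False
    have "\<forall>t. b < t \<and> t < b + min v (a + w - (b + of_int k * L)) \<longrightarrow> in_open_arc L a w t"
      unfolding in_open_arc_def
    proof (intro allI impI)
      fix t assume "b < t \<and> t < b + min v (a + w - (b + of_int k * L))"
      thus "\<exists>k'::int. a < t + of_int k' * L \<and> t + of_int k' * L < a + w"
        using False by (intro exI[of _ "k"]) auto
    qed
    moreover have "min v (a + w - (b + of_int k * L)) > 0" using h assms by auto
    ultimately show ?thesis by blast
  qed
qed


lemma common_pt:
  fixes x :: real
  assumes "\<exists>e>0. \<forall>t. x < t \<and> t < x + e \<longrightarrow> P t" "\<exists>e>0. \<forall>t. x < t \<and> t < x + e \<longrightarrow> Q t"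
  shows "\<exists>t. P t \<and> Q t"
proof -
  obtain e1 e2 :: real where "e1 > 0" "e2 > 0" "\<forall>t. x < t \<and> t < x + e1 \<longrightarrow> P t"
    "\<forall>t. x < t \<and> t < x + e2 \<longrightarrow> Q t" using assms by blast
  thus ?thesis by (intro exI[of _ "x + min e1 e2 / 2"]) auto
qed

lemma count_bound:
  fixes sa wa sb wb :: "nat \<Rightarrow> real"
  assumes wa: "\<forall>i<p. 0 < wa i" and wb: "\<forall>j<q. 0 < wb j"
    and da: "\<forall>i<p. \<forall>i'<p. i \<noteq> i' \<longrightarrow> \<not> meet L (sa i) (wa i) (sa i') (wa i')"
    and db: "\<forall>j<q. \<forall>j'<q. j \<noteq> j' \<longrightarrow> \<not> meet L (sb j) (wb j) (sb j') (wb j')"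
  shows "card {(i,j). i < p \<and> j < q \<and> meet L (sa i) (wa i) (sb j) (wb j)} \<le> p + q"
proof -
  define P where "P = {(i,j). i < p \<and> j < q \<and> meet L (sa i) (wa i) (sb j) (wb j)}"
  define S where "S i j \<longleftrightarrow> (\<exists>e>0. \<forall>t. sa i < t \<and> t < sa i + e \<longrightarrow> in_open_arc L (sb j) (wb j) t)" for i j
  define T where "T i j \<longleftrightarrow> (\<exists>e>0. \<forall>t. sb j < t \<and> t < sb j + e \<longrightarrow> in_open_arc L (sa i) (wa i) t)" for i j
  define f where "f = (\<lambda>(i::nat,j::nat). if S i j then (Inl i :: nat + nat) else Inr j)"
  have ST: "S i j \<or> T i j" if "(i,j) \<in> P" for i j
    using start_lemma[of L "sa i" "wa i" "sb j" "wb j"] that wa wb unfolding P_def S_def T_def by auto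
  have inj: "inj_on f P"
  proof (rule inj_onI)
    fix x y assume x: "x \<in> P" and y: "y \<in> P" and fxy: "f x = f y"
    obtain i j where xe: "x = (i,j)" by (cases x)
    obtain i' j' where ye: "y = (i',j')" by (cases y)
    have ij: "i < p" "j < q" "i' < p" "j' < q" using x y xe ye by (auto simp: P_def)
    show "x = y"
    proof (cases "S i j")
      case True
      hence S2: "S i' j'" and ii: "i = i'" using fxy xe ye by (auto simp: f_def split: if_splits)
      have "j = j'"
      proof (rule ccontr)
        assume "j \<noteq> j'"
        obtain t where "in_open_arc L (sb j) (wb j) t" "in_open_arc L (sb j') (wb j') t"
          using common_pt[of "sa i" "in_open_arc L (sb j) (wb j)" "in_open_arc L (sb j') (wb j')"]
            True S2 ii unfolding S_def by blast
        hence "meet L (sb j) (wb j) (sb j') (wb j')" unfolding meet_def by blast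
        thus False using db ij \<open>j \<noteq> j'\<close> by blast
      qed
      thus ?thesis using xe ye ii by simp
    next
      case False
      hence S2: "\<not> S i' j'" and jj: "j = j'" using fxy xe ye by (auto simp: f_def split: if_splits)
      have T1: "T i j" using ST[of i j] x xe False by auto
      have T2: "T i' j" using ST[of i' j'] y ye S2 jj by auto
      have "i = i'"
      proof (rule ccontr)
        assume "i \<noteq> i'"
        obtain t where "in_open_arc L (sa i) (wa i) t" "in_open_arc L (sa i') (wa i') t"
          using common_pt[of "sb j" "in_open_arc L (sa i) (wa i)" "in_open_arc L (sa i') (wa i')"]
            T1 T2 unfolding T_def by blast
        hence "meet L (sa i) (wa i) (sa i') (wa i')" unfolding meet_def by blast
        thus False using da ij \<open>i \<noteq> i'\<close> by blast
      qed
      thus ?thesis using xe ye jj by simp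
    qed
  qed
  have sub: "f ` P \<subseteq> Inl ` {..<p} \<union> Inr ` {..<q}"
    by (auto simp: f_def P_def)
  have "card P \<le> card (Inl ` {..<p} \<union> Inr ` {..<q} :: (nat + nat) set)"
    by (rule card_inj_on_le[OF inj sub]) simp
  also have "\<dots> = p + q"
    by (subst card_Un_disjoint) (auto simp: card_image)
  finally show ?thesis unfolding P_def .
qed

definition px :: "trect \<Rightarrow> real" where "px r = fst r"
definition pw :: "trect \<Rightarrow> real" where "pw r = fst (snd r)"
definition py :: "trect \<Rightarrow> real" where "py r = fst (snd (snd r))"
definition ph :: "trect \<Rightarrow> real" where "ph r = snd (snd (snd r))"

lemma sees_proj: "sees W H r s \<longleftrightarrow> meet W (px r) (pw r) (px s) (pw s) \<or> meet H (py r) (ph r) (py s) (ph s)"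
  by (cases r; cases s) (simp add: sees_meet px_def pw_def py_def ph_def)

lemma valid_proj: "valid_trect W H r \<Longrightarrow> 0 < pw r \<and> 0 < ph r"
  by (cases r) (simp add: valid_trect_def pw_def ph_def)

lemma arith_end:
  fixes p q :: nat
  assumes "0 < p" "p \<le> q" "p * q \<le> 2 * (p + q)"
  shows "p \<le> 2 \<or> (p, q) \<in> {(3,3), (3,4), (3,5), (3,6), (4,4)}"
proof (rule ccontr)
  assume n: "\<not> ?thesis"
  hence p3: "p \<ge> 3" by auto
  show False
  proof (cases "p = 3")
    case True thus False using n assms by auto
  next
    case F3: False
    show False
    proof (cases "p = 4")
      case True
      thus False using n assms by auto
    next
      case False
      hence "p \<ge> 5" using p3 F3 by auto
      hence "5 * q \<le> p * q" by simp
      moreover have "2 * (p + q) = 2 * p + 2 * q" by simp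
      ultimately show False using assms by linarith
    qed
  qed
qed

lemma only_if:
  assumes "TRVG (Kpq_V p q) Kpq_E" "0 < p" "p \<le> q"
  shows "p * q \<le> 2 * (p + q)"
proof -
  obtain W H R where WH: "0 < W" "0 < H" and val: "\<forall>v\<in>Kpq_V p q. valid_trect W H (R v)"
    and E: "\<forall>u\<in>Kpq_V p q. \<forall>v\<in>Kpq_V p q. u \<noteq> v \<longrightarrow> (Kpq_E u v \<longleftrightarrow> sees W H (R u) (R v))"
    using assms(1) unfolding TRVG_def by blast
  have inA: "Inl i \<in> Kpq_V p q" if "i < p" for i using that by (auto simp: Kpq_V_def)
  have inB: "Inr j \<in> Kpq_V p q" if "j < q" for j using that by (auto simp: Kpq_V_def)
  define a where "a i = R (Inl i)" for i
  define b where "b j = R (Inr j)" for j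
  have cross: "sees W H (a i) (b j)" if "i < p" "j < q" for i j
    using E inA[OF that(1)] inB[OF that(2)] unfolding a_def b_def Kpq_E_def by force
  have nA: "\<not> sees W H (a i) (a i')" if "i < p" "i' < p" "i \<noteq> i'" for i i'
    using E inA[OF that(1)] inA[OF that(2)] that(3) unfolding a_def Kpq_E_def by force
  have nB: "\<not> sees W H (b j) (b j')" if "j < q" "j' < q" "j \<noteq> j'" for j j'
    using E inB[OF that(1)] inB[OF that(2)] that(3) unfolding b_def Kpq_E_def by force
  have pa: "0 < pw (a i) \<and> 0 < ph (a i)" if "i < p" for i
    using val inA[OF that] valid_proj unfolding a_def by blast
  have pb: "0 < pw (b j) \<and> 0 < ph (b j)" if "j < q" for j
    using val inB[OF that] valid_proj unfolding b_def by blast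
  define X where "X = {(i,j). i < p \<and> j < q \<and> meet W ((\<lambda>i. px (a i)) i) ((\<lambda>i. pw (a i)) i) ((\<lambda>j. px (b j)) j) ((\<lambda>j. pw (b j)) j)}"
  define Y where "Y = {(i,j). i < p \<and> j < q \<and> meet H ((\<lambda>i. py (a i)) i) ((\<lambda>i. ph (a i)) i) ((\<lambda>j. py (b j)) j) ((\<lambda>j. ph (b j)) j)}"
  have cX: "card X \<le> p + q" unfolding X_def
    by (rule count_bound) (use pa pb nA nB sees_proj in auto)
  have cY: "card Y \<le> p + q" unfolding Y_def
    by (rule count_bound) (use pa pb nA nB sees_proj in auto)
  have "{..<p} \<times> {..<q} \<subseteq> X \<union> Y" using cross sees_proj unfolding X_def Y_def by auto
  hence "card ({..<p} \<times> {..<q}) \<le> card (X \<union> Y)"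
    by (rule card_mono[rotated]) (rule finite_subset[of _ "{..<p} \<times> {..<q}"], auto simp: X_def Y_def)
  also have "\<dots> \<le> card X + card Y" by (rule card_Un_le)
  finally show ?thesis using cX cY by (simp add: card_cartesian_product)
qed


definition imeet :: "int \<Rightarrow> int \<Rightarrow> int \<Rightarrow> int \<Rightarrow> int \<Rightarrow> bool" where
  "imeet L a w b v \<longleftrightarrow> (a < b+v \<and> b < a+w) \<or> (a < b-L+v \<and> b-L < a+w) \<or> (a < b+L+v \<and> b+L < a+w)"

definition okr :: "int \<Rightarrow> int \<Rightarrow> int \<times> int \<times> int \<times> int \<Rightarrow> bool" where
  "okr W H r = (case r of (x, w, y, h) \<Rightarrow> 0 < w \<and> w < W \<and> 0 < h \<and> h < H \<and> 0 \<le> x \<and> x < W \<and> 0 \<le> y \<and> y < H)"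

definition rr :: "int \<times> int \<times> int \<times> int \<Rightarrow> trect" where
  "rr r = (case r of (x, w, y, h) \<Rightarrow> (of_int x, of_int w, of_int y, of_int h))"

definition isees :: "int \<Rightarrow> int \<Rightarrow> int \<times> int \<times> int \<times> int \<Rightarrow> int \<times> int \<times> int \<times> int \<Rightarrow> bool" where
  "isees W H r s = (case r of (x, w, y, h) \<Rightarrow> case s of (x', w', y', h') \<Rightarrow> imeet W x w x' w' \<or> imeet H y h y' h')"

definition iover :: "int \<Rightarrow> int \<Rightarrow> int \<times> int \<times> int \<times> int \<Rightarrow> int \<times> int \<times> int \<times> int \<Rightarrow> bool" where
  "iover W H r s = (case r of (x, w, y, h) \<Rightarrow> case s of (x', w', y', h') \<Rightarrow> imeet W x w x' w' \<and> imeet H y h y' h')"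

lemma rr_facts:
  assumes "0 < W" "0 < H" "okr W H r" "okr W H s"
  shows "valid_trect (of_int W) (of_int H) (rr r)"
    "sees (of_int W) (of_int H) (rr r) (rr s) \<longleftrightarrow> isees W H r s"
    "non_overlapping (of_int W) (of_int H) (rr r) (rr s) \<longleftrightarrow> \<not> iover W H r s"
proof -
  obtain x w y h where r: "r = (x,w,y,h)" by (cases r)
  obtain x' w' y' h' where s: "s = (x',w',y',h')" by (cases s)
  show "valid_trect (of_int W) (of_int H) (rr r)"
    using assms(3) by (simp add: r rr_def okr_def valid_trect_def)
  have m1: "meet (of_int W) (of_int x) (of_int w) (of_int x') (of_int w') \<longleftrightarrow> imeet W x w x' w'"
    using assms unfolding imeet_def r s okr_def by (intro meet_int) auto
  have m2: "meet (of_int H) (of_int y) (of_int h) (of_int y') (of_int h') \<longleftrightarrow> imeet H y h y' h'"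
    using assms unfolding imeet_def r s okr_def by (intro meet_int) auto
  show "sees (of_int W) (of_int H) (rr r) (rr s) \<longleftrightarrow> isees W H r s"
    by (simp add: r s rr_def sees_meet isees_def m1 m2)
  show "non_overlapping (of_int W) (of_int H) (rr r) (rr s) \<longleftrightarrow> \<not> iover W H r s"
    by (simp add: r s rr_def nonov_meet iover_def m1 m2)
qed

lemma TRVG_int:
  assumes "0 < W" "0 < H" "\<forall>v\<in>V. okr W H (Ri v)"
    "\<forall>u\<in>V. \<forall>v\<in>V. u \<noteq> v \<longrightarrow> \<not> iover W H (Ri u) (Ri v) \<and> (E u v \<longleftrightarrow> isees W H (Ri u) (Ri v))"
  shows "TRVG V E"
proof -
  have v: "\<forall>v\<in>V. valid_trect (of_int W) (of_int H) (rr (Ri v))"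
    using assms(3) rr_facts(1)[OF assms(1,2)] by blast
  have n: "\<forall>u\<in>V. \<forall>v\<in>V. u \<noteq> v \<longrightarrow> non_overlapping (of_int W) (of_int H) (rr (Ri u)) (rr (Ri v))"
   and e: "\<forall>u\<in>V. \<forall>v\<in>V. u \<noteq> v \<longrightarrow> (E u v \<longleftrightarrow> sees (of_int W) (of_int H) (rr (Ri u)) (rr (Ri v)))"
  proof (safe)
    fix u v assume uv: "u \<in> V" "v \<in> V" "u \<noteq> v"
    have ok: "okr W H (Ri u)" "okr W H (Ri v)" using assms(3) uv by auto
    have h: "\<not> iover W H (Ri u) (Ri v)" "E u v \<longleftrightarrow> isees W H (Ri u) (Ri v)" using assms(4) uv by auto
    note f = rr_facts[OF assms(1,2) ok]
    show "non_overlapping (of_int W) (of_int H) (rr (Ri u)) (rr (Ri v))" using f(3) h(1) by simp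
    show "E u v \<Longrightarrow> sees (of_int W) (of_int H) (rr (Ri u)) (rr (Ri v))" using f(2) h(2) by simp
    show "sees (of_int W) (of_int H) (rr (Ri u)) (rr (Ri v)) \<Longrightarrow> E u v" using f(2) h(2) by simp
  qed
  have "0 < real_of_int W" "0 < real_of_int H" using assms(1,2) by auto
  thus ?thesis unfolding TRVG_def
    apply (rule_tac exI[where x="real_of_int W"], rule_tac exI[where x="real_of_int H"], rule_tac exI[where x="\<lambda>v. rr (Ri v)"])
    using v n e by blast
qed

lemma TRVG_mono:
  assumes "TRVG (Kpq_V p q) Kpq_E" "p' \<le> p" "q' \<le> q"
  shows "TRVG (Kpq_V p' q') Kpq_E"
proof -
  have "Kpq_V p' q' \<subseteq> Kpq_V p q" using assms(2,3) by (auto simp: Kpq_V_def)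
  moreover obtain W H R where h: "0 < W" "0 < H" "\<forall>v\<in>Kpq_V p q. valid_trect W H (R v)"
      "\<forall>u\<in>Kpq_V p q. \<forall>v\<in>Kpq_V p q. u \<noteq> v \<longrightarrow> non_overlapping W H (R u) (R v)"
      "\<forall>u\<in>Kpq_V p q. \<forall>v\<in>Kpq_V p q. u \<noteq> v \<longrightarrow> (Kpq_E u v \<longleftrightarrow> sees W H (R u) (R v))"
    using assms(1) unfolding TRVG_def by blast
  ultimately show ?thesis unfolding TRVG_def
    apply (rule_tac exI[where x=W], rule_tac exI[where x=H], rule_tac exI[where x=R])
    by blast
qed

definition R2 :: "nat \<Rightarrow> nat + nat \<Rightarrow> int \<times> int \<times> int \<times> int" where
  "R2 q v = (case v of Inl i \<Rightarrow> if i = 0 then (0, 2 * int q - 1, 2 * int q, 1) else (2 * int q, 1, 0, 2 * int q - 1)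
     | Inr j \<Rightarrow> (2 * int j, 1, 2 * int j, 1))"

lemma imeet_sym: "imeet L a w b v = imeet L b v a w"
  unfolding imeet_def by auto

lemma isees_sym: "isees W H r s = isees W H s r"
  by (cases r; cases s) (auto simp: isees_def imeet_sym)

lemma iover_sym: "iover W H r s = iover W H s r"
  by (cases r; cases s) (auto simp: iover_def imeet_sym)

lemma K2q: assumes q1: "1 \<le> q" shows "TRVG (Kpq_V 2 q) Kpq_E"
proof (rule TRVG_int[of "2 * int q + 2" "2 * int q + 2" _ "R2 q"])
  define M where "M = 2 * int q + 2"
  have V: "Kpq_V 2 q = {Inl 0, Inl 1} \<union> Inr ` {..<q}"
    by (auto simp: Kpq_V_def lessThan_Suc numeral_2_eq_2)
  show "\<forall>v\<in>Kpq_V 2 q. okr (2 * int q + 2) (2 * int q + 2) (R2 q v)"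
    using assms unfolding V by (auto simp: okr_def R2_def)
  have c1: "\<not> iover M M (R2 q (Inr i)) (R2 q (Inr j)) \<and> \<not> isees M M (R2 q (Inr i)) (R2 q (Inr j))"
    if "i < q" "j < q" "i \<noteq> j" for i j
    using that unfolding R2_def iover_def isees_def imeet_def M_def by (simp; presburger)
  have c2: "\<not> iover M M (R2 q (Inl a)) (R2 q (Inr j)) \<and> isees M M (R2 q (Inl a)) (R2 q (Inr j))"
    if "a = 0 \<or> a = 1" "j < q" for a j
    using that q1 unfolding R2_def iover_def isees_def imeet_def M_def by (auto; presburger)
  have c3: "\<not> iover M M (R2 q (Inl 0)) (R2 q (Inl 1)) \<and> \<not> isees M M (R2 q (Inl 0)) (R2 q (Inl 1))"
    using q1 unfolding R2_def iover_def isees_def imeet_def M_def by (simp; presburger)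
  show "\<forall>u\<in>Kpq_V 2 q. \<forall>v\<in>Kpq_V 2 q. u \<noteq> v \<longrightarrow>
     \<not> iover (2 * int q + 2) (2 * int q + 2) (R2 q u) (R2 q v) \<and>
     (Kpq_E u v \<longleftrightarrow> isees (2 * int q + 2) (2 * int q + 2) (R2 q u) (R2 q v))"
  proof -
    have c2': "\<not> iover M M (R2 q (Inr j)) (R2 q (Inl a)) \<and> isees M M (R2 q (Inr j)) (R2 q (Inl a))"
      if "a = 0 \<or> a = 1" "j < q" for a j
      using c2[OF that] iover_sym[of M M "R2 q (Inr j)"] isees_sym[of M M "R2 q (Inr j)"] by simp
    have c3': "\<not> iover M M (R2 q (Inl 1)) (R2 q (Inl 0)) \<and> \<not> isees M M (R2 q (Inl 1)) (R2 q (Inl 0))"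
      using c3 iover_sym[of M M "R2 q (Inl 1)"] isees_sym[of M M "R2 q (Inl 1)"] by simp
    show ?thesis unfolding V M_def[symmetric] using c1 c2 c2' c3 c3' by (auto simp: Kpq_E_def)
  qed
qed (use assms in auto)


definition R36 :: "nat + nat \<Rightarrow> int \<times> int \<times> int \<times> int" where
  "R36 v = (case v of Inl i \<Rightarrow> ([0,4,8]!i, 3, [0,8,4]!i, 3)
     | Inr j \<Rightarrow> ([2,6,10,1,5,9]!j, [3,3,3,1,1,1]!j, [5,1,9,6,2,10]!j, [1,1,1,3,3,3]!j))"

lemma K36: "TRVG (Kpq_V 3 6) Kpq_E"
proof (rule TRVG_int[of 12 12 _ R36])
  have V: "Kpq_V 3 6 = {Inl 0, Inl 1, Inl 2, Inr 0, Inr 1, Inr 2, Inr 3, Inr 4, Inr 5}"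
  proof -
    have "{..<3::nat} = {0,1,2}" "{..<6::nat} = {0,1,2,3,4,5}" by auto
    thus ?thesis by (auto simp: Kpq_V_def)
  qed
  show "\<forall>v\<in>Kpq_V 3 6. okr 12 12 (R36 v)"
    unfolding V by (simp add: okr_def R36_def)
  show "\<forall>u\<in>Kpq_V 3 6. \<forall>v\<in>Kpq_V 3 6. u \<noteq> v \<longrightarrow>
     \<not> iover 12 12 (R36 u) (R36 v) \<and> (Kpq_E u v \<longleftrightarrow> isees 12 12 (R36 u) (R36 v))"
    unfolding V by (simp add: R36_def iover_def isees_def imeet_def Kpq_E_def)
qed auto

definition R44 :: "nat + nat \<Rightarrow> int \<times> int \<times> int \<times> int" where
  "R44 v = (case v of Inl i \<Rightarrow> ([0,4,8,12]!i, 3, [0,12,8,4]!i, 3)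
     | Inr j \<Rightarrow> ([2,6,10,14]!j, 3, [6,2,14,10]!j, 3))"

lemma K44: "TRVG (Kpq_V 4 4) Kpq_E"
proof (rule TRVG_int[of 16 16 _ R44])
  have V: "Kpq_V 4 4 = {Inl 0, Inl 1, Inl 2, Inl 3, Inr 0, Inr 1, Inr 2, Inr 3}"
  proof -
    have "{..<4::nat} = {0,1,2,3}" by auto
    thus ?thesis by (auto simp: Kpq_V_def)
  qed
  show "\<forall>v\<in>Kpq_V 4 4. okr 16 16 (R44 v)"
    unfolding V by (simp add: okr_def R44_def)
  show "\<forall>u\<in>Kpq_V 4 4. \<forall>v\<in>Kpq_V 4 4. u \<noteq> v \<longrightarrow>
     \<not> iover 16 16 (R44 u) (R44 v) \<and> (Kpq_E u v \<longleftrightarrow> isees 16 16 (R44 u) (R44 v))"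
    unfolding V by (simp add: R44_def iover_def isees_def imeet_def Kpq_E_def)
qed auto

theorem theorem5:
  fixes p q :: nat
  assumes "0 < p" and "p \<le> q"
  shows "TRVG (Kpq_V p q) Kpq_E \<longleftrightarrow>
         (p \<le> 2 \<or> (p, q) \<in> {(3,3), (3,4), (3,5), (3,6), (4,4)})"
proof
  assume "TRVG (Kpq_V p q) Kpq_E"
  thus "p \<le> 2 \<or> (p, q) \<in> {(3,3), (3,4), (3,5), (3,6), (4,4)}"
    using only_if[OF _ assms] arith_end[OF assms] by blast
next
  assume h: "p \<le> 2 \<or> (p, q) \<in> {(3,3), (3,4), (3,5), (3,6), (4,4)}"
  show "TRVG (Kpq_V p q) Kpq_E"
  proof (cases "p \<le> 2")
    case True
    thus ?thesis using TRVG_mono[OF K2q[of q]] assms by auto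
  next
    case False
    hence "(p = 3 \<and> q \<le> 6) \<or> (p = 4 \<and> q = 4)" using h by auto
    thus ?thesis using TRVG_mono[OF K36] K44 by auto
  qed
qed

end
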